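(* Let $\tau$ be a tau-function of the extended bigraded Toda hierarchy with wave operators $W,\bar W$. For every $n\ge1$, $$-\frac{\bigl((L^{\frac{-n}{k}})_-W\bigr)z^s}{Wz^s}=G(z)(nt_n)-nt_n,\qquad \frac{\bigl((L^{\frac{-n}{k}})_+\bar W\bigr)z^s}{\bar Wz^s}=\bar G(z)(nt_n)-nt_n,$$ and $$-\frac{\bigl((L^{\frac{-n}{m}})_-W\bigr)z^s}{Wz^s}=G(z)(n\bar t_n)-n\bar t_n,\qquad \frac{\bigl((L^{\frac{-n}{m}})_+\bar W\bigr)z^s}{\bar Wz^s}=\bar G(z)(n\bar t_n)-n\bar t_n.$$ That is, the vector fields on tau-functions induced by $\partial^*_{L^{\frac{-n}{k}}}$ and $\partial^*_{L^{\frac{-n}{m}}}$ are multiplication by $nt_n$ and $n\bar t_n$, respectively, up to adding a function from $\mathcal F$.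
   Context: Let $s$ be a variable, $\Lambda$ the shift $(\Lambda f)(s)=f(s+1)$, $\mathcal A$ the space of formal difference operators $\sum_{i\in\mathbb Z}a_i(s)\Lambda^i$, $A_+=\sum_{i\ge0}a_i\Lambda^i$, $A_-=\sum_{i<0}a_i\Lambda^i$, products $(a(s)\Lambda^i)(b(s)\Lambda^j)=a(s)b(s+i)\Lambda^{i+j}$ where defined; operators act on $z^s$ by $(a(s)\Lambda^i)z^s=a(s)z^iz^s$. Fix $k,m\ge1$. Variables: $s=x_0$, $\mathbf x=(x_1,\dots)$, $\mathbf t=(t_1,\dots)$, $\bar{\mathbf t}=(\bar t_1,\dots)$, with $t_{nk}$ and $\bar t_{nm}$ distinct. Let $[z]=(z,z^2/2,z^3/3,\dots)$; for a function $g(s,\mathbf t,\bar{\mathbf t},\mathbf x)$ put $G(z)g=g(s,\mathbf t-[z^{-1}],\bar{\mathbf t},\mathbf x)$, $\bar G(z)g=g(s+1,\mathbf t,\bar{\mathbf t}+[z],\mathbf x)$. A tau-function of the EBTH is a function $\tau(s,\mathbf t,\bar{\mathbf t},\mathbf x)$ such that, writing $G(z)\tau/\tau=1+\sum_{i\ge1}w_iz^{-i}$, $\bar G(z)\tau/\tau=\sum_{i\ge0}\bar w_iz^i$, the operators $W=1+\sum w_i\Lambda^{-i}$, $\bar W=\sum\bar w_i\Lambda^i$ ($\bar w_0\ne0$) satisfy $W\Lambda^kW^{-1}=\bar W\Lambda^{-m}\bar W^{-1}=:L$ with $L=\Lambda^k+\dots+u_{-m}\Lambda^{-m}$ ($u_{-m}\ne0$)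 and the EBTH flows $\partial_{t_n}W=-(L^{\frac nk})_-W$, $\partial_{t_n}\bar W=(L^{\frac nk})_+\bar W$, $\partial_{\bar t_n}W=-(L^{\frac nm})_-W$, $\partial_{\bar t_n}\bar W=(L^{\frac nm})_+\bar W$, $\partial_{x_n}W=-(2L^n\log L)_-W$, $\partial_{x_n}\bar W=(2L^n\log L)_+\bar W$, where $L^{\frac nk}:=W\Lambda^nW^{-1}$, $L^{\frac nm}:=\bar W\Lambda^{-n}\bar W^{-1}$ ($n\in\mathbb Z$) and $\log L=\frac12W\partial_sW^{-1}-\frac12\bar W\partial_s\bar W^{-1}$. For a difference operator $a$ commuting with $L$, $\partial^*_a$ denotes the symmetry $W\mapsto-a_-W$, $\bar W\mapsto a_+\bar W$. $\mathcal F$ is the space of functions $f(s,\mathbf x)$ with $f(s+1,\mathbf x)=f(s,\mathbf x)$. *)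

theory Defs
  imports "HOL-Analysis.Analysis" "HOL-Library.Groups_Big_Fun"
begin

(* A point (s, t, tbar, x) of the space of independent variables; s = x_0.
   Index 0 of tv, tbv, xv is unused (times are t_1, t_2, ...). *)
record pt =
  sv  :: complex
  tv  :: "nat \<Rightarrow> complex"
  tbv :: "nat \<Rightarrow> complex"
  xv  :: "nat \<Rightarrow> complex"

type_synonym fn = "pt \<Rightarrow> complex"

(* difference operator  sum_i a_i(s,...) Lambda^i  as its coefficient family i |-> a_i *)
type_synonym dop = "int \<Rightarrow> fn"

definition shiftpt :: "int \<Rightarrow> pt \<Rightarrow> pt" where
  "shiftpt i p = p\<lparr>sv := sv p + of_int i\<rparr>"

(* (a Lambda^i)(b Lambda^j) = a(s) b(s+i) Lambda^(i+j), extended bilinearly;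
   the coefficient sum is finite whenever the product is defined *)
definition opmult :: "dop \<Rightarrow> dop \<Rightarrow> dop" where
  "opmult A B = (\<lambda>j p. Sum_any (\<lambda>i. A i p * B (j - i) (shiftpt i p)))"

definition Lam :: "int \<Rightarrow> dop" where
  "Lam n = (\<lambda>i p. if i = n then 1 else 0)"

definition opplus :: "dop \<Rightarrow> dop" where
  "opplus A = (\<lambda>i p. if 0 \<le> i then A i p else 0)"

definition opminus :: "dop \<Rightarrow> dop" where
  "opminus A = (\<lambda>i p. if i < 0 then A i p else 0)"

definition opsub :: "dop \<Rightarrow> dop \<Rightarrow> dop" where
  "opsub A B = (\<lambda>i p. A i p - B i p)"

definition opscale :: "complex \<Rightarrow> dop \<Rightarrow> dop" where
  "opscale c A = (\<lambda>i p. c * A i p)"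

primrec oppow :: "dop \<Rightarrow> nat \<Rightarrow> dop" where
  "oppow A 0 = Lam 0"
| "oppow A (Suc n) = opmult A (oppow A n)"

definition lower_inv :: "dop \<Rightarrow> dop" where
  "lower_inv W = (THE V. (\<forall>i>0. V i = (\<lambda>p. 0)) \<and> opmult W V = Lam 0 \<and> opmult V W = Lam 0)"

definition upper_inv :: "dop \<Rightarrow> dop" where
  "upper_inv W = (THE V. (\<forall>i<0. V i = (\<lambda>p. 0)) \<and> opmult W V = Lam 0 \<and> opmult V W = Lam 0)"

definition opds :: "dop \<Rightarrow> dop" where
  "opds A = (\<lambda>i p. deriv (\<lambda>y. A i (p\<lparr>sv := y\<rparr>)) (sv p))"

(* log L = 1/2 W d_s W^-1 - 1/2 Wb d_s Wb^-1, where W o d_s o W^-1 = d_s + W (W^-1)_s *)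
definition logL :: "dop \<Rightarrow> dop \<Rightarrow> dop" where
  "logL W Wb = opsub (opscale (1/2) (opmult W (opds (lower_inv W))))
                     (opscale (1/2) (opmult Wb (opds (upper_inv Wb))))"

(* L^(n/k) := W Lambda^n W^-1 ,  L^(n/m) := Wb Lambda^(-n) Wb^-1 *)
definition fracK :: "dop \<Rightarrow> int \<Rightarrow> dop" where
  "fracK W n = opmult (opmult W (Lam n)) (lower_inv W)"

definition fracM :: "dop \<Rightarrow> int \<Rightarrow> dop" where
  "fracM Wb n = opmult (opmult Wb (Lam (- n))) (upper_inv Wb)"

definition has_dt :: "nat \<Rightarrow> fn \<Rightarrow> pt \<Rightarrow> complex \<Rightarrow> bool" where
  "has_dt n f p D \<longleftrightarrow> ((\<lambda>y. f (p\<lparr>tv := (tv p)(n := y)\<rparr>)) has_field_derivative D) (at (tv p n))"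

definition has_dtb :: "nat \<Rightarrow> fn \<Rightarrow> pt \<Rightarrow> complex \<Rightarrow> bool" where
  "has_dtb n f p D \<longleftrightarrow> ((\<lambda>y. f (p\<lparr>tbv := (tbv p)(n := y)\<rparr>)) has_field_derivative D) (at (tbv p n))"

definition has_dx :: "nat \<Rightarrow> fn \<Rightarrow> pt \<Rightarrow> complex \<Rightarrow> bool" where
  "has_dx n f p D \<longleftrightarrow> ((\<lambda>y. f (p\<lparr>xv := (xv p)(n := y)\<rparr>)) has_field_derivative D) (at (xv p n))"

(* action on z^s, divided by z^s:  (sum a_i Lambda^i) z^s = (sum a_i z^i) z^s *)
definition act :: "dop \<Rightarrow> pt \<Rightarrow> complex \<Rightarrow> complex" where
  "act A p z = (\<Sum>\<^sub>\<infinity>i. A i p * z powi i)"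

definition bracket :: "complex \<Rightarrow> nat \<Rightarrow> complex" where
  "bracket z j = z ^ j / of_nat j"

definition Gop :: "complex \<Rightarrow> fn \<Rightarrow> fn" where
  "Gop z g p = g (p\<lparr>tv := (\<lambda>j. tv p j - bracket (1 / z) j)\<rparr>)"

definition Gbar :: "complex \<Rightarrow> fn \<Rightarrow> fn" where
  "Gbar z g p = g (p\<lparr>sv := sv p + 1, tbv := (\<lambda>j. tbv p j + bracket z j)\<rparr>)"

definition Wop :: "(nat \<Rightarrow> fn) \<Rightarrow> dop" where
  "Wop w = (\<lambda>i p. if i = 0 then 1 else if i < 0 then w (nat (- i)) p else 0)"

definition Wbop :: "(nat \<Rightarrow> fn) \<Rightarrow> dop" where
  "Wbop wb = (\<lambda>i p. if 0 \<le> i then wb (nat i) p else 0)"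

definition tau_EBTH :: "nat \<Rightarrow> nat \<Rightarrow> fn \<Rightarrow> (nat \<Rightarrow> fn) \<Rightarrow> (nat \<Rightarrow> fn) \<Rightarrow> bool" where
  "tau_EBTH k m \<tau> w wb \<longleftrightarrow>
    (\<forall>p. \<forall>\<^sub>F z in at_infinity.
        ((\<lambda>i. Wop w i p * z powi i) has_sum (Gop z \<tau> p / \<tau> p)) UNIV) \<and>
    (\<forall>p. \<forall>\<^sub>F z in at 0.
        ((\<lambda>i. Wbop wb i p * z powi i) has_sum (Gbar z \<tau> p / \<tau> p)) UNIV) \<and>
    (\<forall>p. wb 0 p \<noteq> 0) \<and>
    (let W = Wop w; Wb = Wbop wb; L = opmult (opmult W (Lam (int k))) (lower_inv W) in
      L = opmult (opmult Wb (Lam (- int m))) (upper_inv Wb) \<and>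
      (\<forall>i. i > int k \<or> i < - int m \<longrightarrow> L i = (\<lambda>p. 0)) \<and>
      L (int k) = (\<lambda>p. 1) \<and> (\<forall>p. L (- int m) p \<noteq> 0) \<and>
      (\<forall>n\<ge>1. \<forall>i p.
         has_dt n (W i) p (- opmult (opminus (fracK W (int n))) W i p) \<and>
         has_dt n (Wb i) p (opmult (opplus (fracK W (int n))) Wb i p) \<and>
         has_dtb n (W i) p (- opmult (opminus (fracM Wb (int n))) W i p) \<and>
         has_dtb n (Wb i) p (opmult (opplus (fracM Wb (int n))) Wb i p) \<and>
         has_dx n (W i) p
           (- opmult (opminus (opscale 2 (opmult (oppow L n) (logL W Wb)))) W i p) \<and>
         has_dx n (Wb i) p
           (opmult (opplus (opscale 2 (opmult (oppow L n) (logL W Wb)))) Wb i p)))"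

end

theory Submission
  imports Defs
begin


lemma opmult_apply: "opmult A B j p = Sum_any (\<lambda>i. A i p * B (j - i) (shiftpt i p))"
  by (simp add: opmult_def)

lemma shiftpt_shiftpt[simp]: "shiftpt a (shiftpt b p) = shiftpt (b + a) p"
  by (simp add: shiftpt_def add.assoc)

lemma shiftpt_0[simp]: "shiftpt 0 p = p"
  by (simp add: shiftpt_def)

lemma assoc_gen:
  assumes fI: "finite I" and fK: "finite K"
    and h: "\<And>l i. A l \<noteq> (\<lambda>_. 0) \<Longrightarrow> B (i - l) \<noteq> (\<lambda>_. 0) \<Longrightarrow> C (j - i) \<noteq> (\<lambda>_. 0) \<Longrightarrow> l \<in> I \<and> i \<in> K"
  shows "opmult (opmult A B) C j p = opmult A (opmult B C) j p"
proof -
  define X where "X = (\<lambda>l i. A l p * B (i - l) (shiftpt l p) * C (j - i) (shiftpt i p))"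
  have L: "opmult (opmult A B) C j p = (\<Sum>i\<in>K. \<Sum>l\<in>I. X l i)"
    unfolding opmult_apply
  proof (subst Sum_any.expand_superset[OF fK])
    show "{i. Sum_any (\<lambda>l. A l p * B (i - l) (shiftpt l p)) * C (j - i) (shiftpt i p) \<noteq> 0} \<subseteq> K"
    proof
      fix i assume "i \<in> {i. Sum_any (\<lambda>l. A l p * B (i - l) (shiftpt l p)) * C (j - i) (shiftpt i p) \<noteq> 0}"
      then have nz: "Sum_any (\<lambda>l. A l p * B (i - l) (shiftpt l p)) \<noteq> 0" and c: "C (j - i) (shiftpt i p) \<noteq> 0" by auto
      from nz obtain l where "A l p * B (i - l) (shiftpt l p) \<noteq> 0"
        by (rule Sum_any.not_neutral_obtains_not_neutral)
      then have 1: "A l \<noteq> (\<lambda>_. 0)" and 2: "B (i - l) \<noteq> (\<lambda>_. 0)" by (auto dest: fun_cong)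
      from c have 3: "C (j - i) \<noteq> (\<lambda>_. 0)" by (auto dest: fun_cong)
      from h[OF 1 2 3] show "i \<in> K" by simp
    qed
  next
    show "(\<Sum>i\<in>K. Sum_any (\<lambda>l. A l p * B (i - l) (shiftpt l p)) * C (j - i) (shiftpt i p)) = (\<Sum>i\<in>K. \<Sum>l\<in>I. X l i)"
    proof (rule sum.cong[OF refl])
      fix i assume "i \<in> K"
      show "Sum_any (\<lambda>l. A l p * B (i - l) (shiftpt l p)) * C (j - i) (shiftpt i p) = (\<Sum>l\<in>I. X l i)"
      proof (cases "C (j - i) (shiftpt i p) = 0")
        case True then show ?thesis by (simp add: X_def)
      next
        case False
        then have c: "C (j - i) \<noteq> (\<lambda>_. 0)" by (auto dest: fun_cong)
        have "Sum_any (\<lambda>l. A l p * B (i - l) (shiftpt l p)) = (\<Sum>l\<in>I. A l p * B (i - l) (shiftpt l p))"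
        proof (rule Sum_any.expand_superset[OF fI], rule)
          fix l assume "l \<in> {l. A l p * B (i - l) (shiftpt l p) \<noteq> 0}"
          then have 1: "A l \<noteq> (\<lambda>_. 0)" and 2: "B (i - l) \<noteq> (\<lambda>_. 0)" by (auto dest: fun_cong)
          from h[OF 1 2 c] show "l \<in> I" by simp
        qed
        then show ?thesis by (simp add: X_def sum_distrib_right)
      qed
    qed
  qed
  have R: "opmult A (opmult B C) j p = (\<Sum>l\<in>I. \<Sum>i\<in>K. X l i)"
    unfolding opmult_apply
  proof (subst Sum_any.expand_superset[OF fI])
    show "{l. A l p * Sum_any (\<lambda>r. B r (shiftpt l p) * C (j - l - r) (shiftpt r (shiftpt l p))) \<noteq> 0} \<subseteq> I"
    proof
      fix l assume "l \<in> {l. A l p * Sum_any (\<lambda>r. B r (shiftpt l p) * C (j - l - r) (shiftpt r (shiftpt l p))) \<noteq> 0}"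
      then have a: "A l p \<noteq> 0" and nz: "Sum_any (\<lambda>r. B r (shiftpt l p) * C (j - l - r) (shiftpt r (shiftpt l p))) \<noteq> 0" by auto
      from nz obtain r where "B r (shiftpt l p) * C (j - l - r) (shiftpt r (shiftpt l p)) \<noteq> 0"
        by (rule Sum_any.not_neutral_obtains_not_neutral)
      then have 2: "B ((l + r) - l) \<noteq> (\<lambda>_. 0)" and 3: "C (j - (l + r)) \<noteq> (\<lambda>_. 0)" by (auto dest: fun_cong simp: algebra_simps)
      from a have 1: "A l \<noteq> (\<lambda>_. 0)" by (auto dest: fun_cong)
      from h[OF 1 2 3] show "l \<in> I" by simp
    qed
  next
    show "(\<Sum>l\<in>I. A l p * Sum_any (\<lambda>r. B r (shiftpt l p) * C (j - l - r) (shiftpt r (shiftpt l p)))) = (\<Sum>l\<in>I. \<Sum>i\<in>K. X l i)"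
    proof (rule sum.cong[OF refl])
      fix l assume "l \<in> I"
      show "A l p * Sum_any (\<lambda>r. B r (shiftpt l p) * C (j - l - r) (shiftpt r (shiftpt l p))) = (\<Sum>i\<in>K. X l i)"
      proof (cases "A l p = 0")
        case True then show ?thesis by (simp add: X_def)
      next
        case False
        then have a: "A l \<noteq> (\<lambda>_. 0)" by (auto dest: fun_cong)
        have fin: "finite ((\<lambda>i. i - l) ` K)" using fK by simp
        have "Sum_any (\<lambda>r. B r (shiftpt l p) * C (j - l - r) (shiftpt r (shiftpt l p)))
            = (\<Sum>r\<in>(\<lambda>i. i - l) ` K. B r (shiftpt l p) * C (j - l - r) (shiftpt r (shiftpt l p)))"
        proof (rule Sum_any.expand_superset[OF fin], rule)
          fix r assume "r \<in> {r. B r (shiftpt l p) * C (j - l - r) (shiftpt r (shiftpt l p)) \<noteq> 0}"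
          then have 2: "B ((l + r) - l) \<noteq> (\<lambda>_. 0)" and 3: "C (j - (l + r)) \<noteq> (\<lambda>_. 0)" by (auto dest: fun_cong simp: algebra_simps)
          from h[OF a 2 3] have "l + r \<in> K" by simp
          then show "r \<in> (\<lambda>i. i - l) ` K" by (rule rev_image_eqI) simp
        qed
        also have "\<dots> = (\<Sum>i\<in>K. B (i - l) (shiftpt l p) * C (j - i) (shiftpt i p))"
          by (subst sum.reindex) (auto simp: inj_on_def)
        finally show ?thesis by (simp add: X_def sum_distrib_left mult.assoc)
      qed
    qed
  qed
  have S: "(\<Sum>i\<in>K. \<Sum>l\<in>I. X l i) = (\<Sum>l\<in>I. \<Sum>i\<in>K. X l i)" by (rule sum.swap)
  show ?thesis by (simp only: L R S)
qed


lemma opmult_Lam_right: "opmult A (Lam n) j p = A (j - n) p"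
proof -
  have "opmult A (Lam n) j p = (\<Sum>i\<in>{j - n}. A i p * Lam n (j - i) (shiftpt i p))"
    unfolding opmult_apply by (rule Sum_any.expand_superset) (auto simp: Lam_def)
  then show ?thesis by (simp add: Lam_def)
qed

lemma opmult_Lam_left: "opmult (Lam n) A j p = A (j - n) (shiftpt n p)"
proof -
  have "opmult (Lam n) A j p = (\<Sum>i\<in>{n}. Lam n i p * A (j - i) (shiftpt i p))"
    unfolding opmult_apply by (rule Sum_any.expand_superset) (auto simp: Lam_def)
  then show ?thesis by (simp add: Lam_def)
qed

lemma opmult_Lam0_right[simp]: "opmult A (Lam 0) = A"
  by (intro ext) (simp add: opmult_Lam_right)

lemma opmult_Lam0_left[simp]: "opmult (Lam 0) A = A"
  by (intro ext) (simp add: opmult_Lam_left)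

definition bab :: "dop \<Rightarrow> int \<Rightarrow> bool" where
  "bab A a \<longleftrightarrow> (\<forall>i>a. A i = (\<lambda>_. 0))"

definition bbb :: "dop \<Rightarrow> int \<Rightarrow> bool" where
  "bbb A a \<longleftrightarrow> (\<forall>i<a. A i = (\<lambda>_. 0))"

lemma bab_mult: assumes "bab A a" "bab B b" shows "bab (opmult A B) (a + b)"
  unfolding bab_def
proof (intro allI impI ext)
  fix j p assume j: "j > a + b"
  have "\<And>i. A i p * B (j - i) (shiftpt i p) = 0"
  proof -
    fix i show "A i p * B (j - i) (shiftpt i p) = 0"
    proof (cases "i > a")
      case True then show ?thesis using assms(1) by (simp add: bab_def)
    next
      case False then have "j - i > b" using j by linarith
      then show ?thesis using assms(2) by (simp add: bab_def)
    qed
  qed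
  then have "(\<lambda>i. A i p * B (j - i) (shiftpt i p)) = (\<lambda>_. 0)" by (intro ext)
  then show "opmult A B j p = 0" by (simp only: opmult_apply Sum_any.neutral)
qed

lemma bbb_mult: assumes "bbb A a" "bbb B b" shows "bbb (opmult A B) (a + b)"
  unfolding bbb_def
proof (intro allI impI ext)
  fix j p assume j: "j < a + b"
  have "\<And>i. A i p * B (j - i) (shiftpt i p) = 0"
  proof -
    fix i show "A i p * B (j - i) (shiftpt i p) = 0"
    proof (cases "i < a")
      case True then show ?thesis using assms(1) by (simp add: bbb_def)
    next
      case False then have "j - i < b" using j by linarith
      then show ?thesis using assms(2) by (simp add: bbb_def)
    qed
  qed
  then have "(\<lambda>i. A i p * B (j - i) (shiftpt i p)) = (\<lambda>_. 0)" by (intro ext)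
  then show "opmult A B j p = 0" by (simp only: opmult_apply Sum_any.neutral)
qed

lemma bab_Lam: "bab (Lam n) n" by (simp add: bab_def Lam_def)
lemma bbb_Lam: "bbb (Lam n) n" by (simp add: bbb_def Lam_def)

lemma bab_nz: "bab A a \<Longrightarrow> A i \<noteq> (\<lambda>_. 0) \<Longrightarrow> i \<le> a"
  unfolding bab_def by (meson not_le)
lemma bbb_nz: "bbb A a \<Longrightarrow> A i \<noteq> (\<lambda>_. 0) \<Longrightarrow> a \<le> i"
  unfolding bbb_def by (meson not_le)

lemma assoc_bab:
  assumes "bab A a" "bab B b" "bab C c"
  shows "opmult (opmult A B) C = opmult A (opmult B C)"
proof (intro ext)
  fix j p
  show "opmult (opmult A B) C j p = opmult A (opmult B C) j p"
  proof (rule assoc_gen[of "{j - c - b..a}" "{j - c..a + b}"])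
    fix l i assume "A l \<noteq> (\<lambda>_. 0)" "B (i - l) \<noteq> (\<lambda>_. 0)" "C (j - i) \<noteq> (\<lambda>_. 0)"
    then have "l \<le> a" "i - l \<le> b" "j - i \<le> c" using bab_nz[OF assms(1)] bab_nz[OF assms(2)] bab_nz[OF assms(3)] by auto
    then show "l \<in> {j - c - b..a} \<and> i \<in> {j - c..a + b}" by auto
  qed auto
qed

lemma assoc_bbb:
  assumes "bbb A a" "bbb B b" "bbb C c"
  shows "opmult (opmult A B) C = opmult A (opmult B C)"
proof (intro ext)
  fix j p
  show "opmult (opmult A B) C j p = opmult A (opmult B C) j p"
  proof (rule assoc_gen[of "{a..j - c - b}" "{a + b..j - c}"])
    fix l i assume "A l \<noteq> (\<lambda>_. 0)" "B (i - l) \<noteq> (\<lambda>_. 0)" "C (j - i) \<noteq> (\<lambda>_. 0)"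
    then have "a \<le> l" "b \<le> i - l" "c \<le> j - i" using bbb_nz[OF assms(1)] bbb_nz[OF assms(2)] bbb_nz[OF assms(3)] by auto
    then show "l \<in> {a..j - c - b} \<and> i \<in> {a + b..j - c}" by auto
  qed auto
qed

fun linvc :: "dop \<Rightarrow> nat \<Rightarrow> pt \<Rightarrow> complex" where
  "linvc A d p = ((if d = 0 then 1 else 0)
      - (\<Sum>e\<in>{..<d}. linvc A e p * A (int e - int d) (shiftpt (- int e) p)))
      / A 0 (shiftpt (- int d) p)"

declare linvc.simps[simp del]

fun uinvc :: "dop \<Rightarrow> nat \<Rightarrow> pt \<Rightarrow> complex" where
  "uinvc A d p = ((if d = 0 then 1 else 0)
      - (\<Sum>e\<in>{..<d}. uinvc A e p * A (int d - int e) (shiftpt (int e) p)))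
      / A 0 (shiftpt (int d) p)"

declare uinvc.simps[simp del]



definition linv :: "dop \<Rightarrow> dop" where
  "linv A = (\<lambda>i p. if i \<le> 0 then linvc A (nat (- i)) p else 0)"

definition uinv :: "dop \<Rightarrow> dop" where
  "uinv A = (\<lambda>i p. if 0 \<le> i then uinvc A (nat i) p else 0)"

lemma bab_linv: "bab (linv A) 0" by (simp add: bab_def linv_def)
lemma bbb_uinv: "bbb (uinv A) 0" by (simp add: bbb_def uinv_def)

lemma linv_left: assumes "bab A 0" "\<forall>p. A 0 p \<noteq> 0" shows "opmult (linv A) A = Lam 0"
proof (intro ext)
  fix j p
  show "opmult (linv A) A j p = Lam 0 j p"
  proof (cases "j > 0")
    case True
    have "bab (opmult (linv A) A) (0+0)" by (rule bab_mult[OF bab_linv assms(1)])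
    then show ?thesis using True by (simp add: bab_def Lam_def)
  next
    case False
    define d where "d = nat (-j)"
    have j: "j = - int d" using False d_def by simp
    have "opmult (linv A) A j p = (\<Sum>i\<in>(\<lambda>e. - int e) ` {..d}. linv A i p * A (j - i) (shiftpt i p))"
      unfolding opmult_apply
    proof (rule Sum_any.expand_superset, simp, rule)
      fix i assume "i \<in> {i. linv A i p * A (j - i) (shiftpt i p) \<noteq> 0}"
      then have 1: "linv A i p \<noteq> 0" and 2: "A (j - i) (shiftpt i p) \<noteq> 0" by auto
      from 1 have "i \<le> 0" by (auto simp: linv_def split: if_splits)
      moreover from 2 have "A (j - i) \<noteq> (\<lambda>_. 0)" by (auto dest: fun_cong)
      then have "j - i \<le> 0" using bab_nz[OF assms(1)] by blast
      ultimately show "i \<in> (\<lambda>e. - int e) ` {..d}"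
        by (intro image_eqI[of _ _ "nat (-i)"]) (auto simp: j)
    qed
    also have "\<dots> = (\<Sum>e\<le>d. linvc A e p * A (int e - int d) (shiftpt (- int e) p))"
      by (subst sum.reindex) (auto simp: inj_on_def linv_def j)
    also have "\<dots> = (\<Sum>e<d. linvc A e p * A (int e - int d) (shiftpt (- int e) p))
                    + linvc A d p * A 0 (shiftpt (- int d) p)"
      by (simp add: lessThan_Suc_atMost[symmetric])
    also have "linvc A d p * A 0 (shiftpt (- int d) p) = (if d = 0 then 1 else 0)
         - (\<Sum>e<d. linvc A e p * A (int e - int d) (shiftpt (- int e) p))"
      using assms(2) by (subst linvc.simps) (simp add: field_simps)
    finally show ?thesis by (simp add: Lam_def j)
  qed
qed

lemma uinv_left: assumes "bbb A 0" "\<forall>p. A 0 p \<noteq> 0" shows "opmult (uinv A) A = Lam 0"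
proof (intro ext)
  fix j p
  show "opmult (uinv A) A j p = Lam 0 j p"
  proof (cases "j < 0")
    case True
    have "bbb (opmult (uinv A) A) (0+0)" by (rule bbb_mult[OF bbb_uinv assms(1)])
    then show ?thesis using True by (simp add: bbb_def Lam_def)
  next
    case False
    define d where "d = nat j"
    have j: "j = int d" using False d_def by simp
    have "opmult (uinv A) A j p = (\<Sum>i\<in>int ` {..d}. uinv A i p * A (j - i) (shiftpt i p))"
      unfolding opmult_apply
    proof (rule Sum_any.expand_superset, simp, rule)
      fix i assume "i \<in> {i. uinv A i p * A (j - i) (shiftpt i p) \<noteq> 0}"
      then have 1: "uinv A i p \<noteq> 0" and 2: "A (j - i) (shiftpt i p) \<noteq> 0" by auto
      from 1 have "0 \<le> i" by (auto simp: uinv_def split: if_splits)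
      moreover from 2 have "A (j - i) \<noteq> (\<lambda>_. 0)" by (auto dest: fun_cong)
      then have "0 \<le> j - i" using bbb_nz[OF assms(1)] by blast
      ultimately show "i \<in> int ` {..d}"
        by (intro image_eqI[of _ _ "nat i"]) (auto simp: j)
    qed
    also have "\<dots> = (\<Sum>e\<le>d. uinvc A e p * A (int d - int e) (shiftpt (int e) p))"
      by (subst sum.reindex) (auto simp: inj_on_def uinv_def j)
    also have "\<dots> = (\<Sum>e<d. uinvc A e p * A (int d - int e) (shiftpt (int e) p))
                    + uinvc A d p * A 0 (shiftpt (int d) p)"
      by (simp add: lessThan_Suc_atMost[symmetric])
    also have "uinvc A d p * A 0 (shiftpt (int d) p) = (if d = 0 then 1 else 0)
         - (\<Sum>e<d. uinvc A e p * A (int d - int e) (shiftpt (int e) p))"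
      using assms(2) by (subst uinvc.simps) (simp add: field_simps)
    finally show ?thesis by (simp add: Lam_def j)
  qed
qed

lemma lower_inv_props:
  assumes A: "bab A 0" and A0: "\<forall>p. A 0 p \<noteq> 0"
  shows "bab (lower_inv A) 0 \<and> opmult A (lower_inv A) = Lam 0 \<and> opmult (lower_inv A) A = Lam 0"
proof -
  define V where "V = linv A"
  have V1: "opmult V A = Lam 0" unfolding V_def by (rule linv_left[OF A A0])
  have V0: "\<forall>p. V 0 p \<noteq> 0"
  proof
    fix p have "V 0 p = 1 / A 0 p" unfolding V_def linv_def by (subst linvc.simps) simp
    then show "V 0 p \<noteq> 0" using A0 by simp
  qed
  have bV: "bab V 0" unfolding V_def by (rule bab_linv)
  have U: "opmult (linv V) V = Lam 0" by (rule linv_left[OF bV V0])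
  have "linv V = opmult (linv V) (opmult V A)" by (simp add: V1)
  also have "\<dots> = opmult (opmult (linv V) V) A" by (rule assoc_bab[symmetric, OF bab_linv bV A])
  also have "\<dots> = A" by (simp add: U)
  finally have "linv V = A" .
  with U have V2: "opmult A V = Lam 0" by simp
  have uniq: "V' = V" if h: "bab V' 0" "opmult A V' = Lam 0" "opmult V' A = Lam 0" for V'
  proof -
    have "V' = opmult (opmult V A) V'" by (simp add: V1)
    also have "\<dots> = opmult V (opmult A V')" by (rule assoc_bab[OF bV A h(1)])
    also have "\<dots> = V" by (simp add: h(2))
    finally show ?thesis .
  qed
  have "lower_inv A = V"
    unfolding lower_inv_def
  proof (rule the_equality)
    show "(\<forall>i>0. V i = (\<lambda>p. 0)) \<and> opmult A V = Lam 0 \<and> opmult V A = Lam 0"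
      using bV V1 V2 by (simp add: bab_def)
  next
    fix V' assume "(\<forall>i>0. V' i = (\<lambda>p. 0)) \<and> opmult A V' = Lam 0 \<and> opmult V' A = Lam 0"
    then show "V' = V" using uniq by (simp add: bab_def)
  qed
  then show ?thesis using bV V1 V2 by simp
qed

lemma upper_inv_props:
  assumes A: "bbb A 0" and A0: "\<forall>p. A 0 p \<noteq> 0"
  shows "bbb (upper_inv A) 0 \<and> opmult A (upper_inv A) = Lam 0 \<and> opmult (upper_inv A) A = Lam 0"
proof -
  define V where "V = uinv A"
  have V1: "opmult V A = Lam 0" unfolding V_def by (rule uinv_left[OF A A0])
  have V0: "\<forall>p. V 0 p \<noteq> 0"
  proof
    fix p have "V 0 p = 1 / A 0 p" unfolding V_def uinv_def by (subst uinvc.simps) simp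
    then show "V 0 p \<noteq> 0" using A0 by simp
  qed
  have bV: "bbb V 0" unfolding V_def by (rule bbb_uinv)
  have U: "opmult (uinv V) V = Lam 0" by (rule uinv_left[OF bV V0])
  have "uinv V = opmult (uinv V) (opmult V A)" by (simp add: V1)
  also have "\<dots> = opmult (opmult (uinv V) V) A" by (rule assoc_bbb[symmetric, OF bbb_uinv bV A])
  also have "\<dots> = A" by (simp add: U)
  finally have "uinv V = A" .
  with U have V2: "opmult A V = Lam 0" by simp
  have uniq: "V' = V" if h: "bbb V' 0" "opmult A V' = Lam 0" "opmult V' A = Lam 0" for V'
  proof -
    have "V' = opmult (opmult V A) V'" by (simp add: V1)
    also have "\<dots> = opmult V (opmult A V')" by (rule assoc_bbb[OF bV A h(1)])
    also have "\<dots> = V" by (simp add: h(2))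
    finally show ?thesis .
  qed
  have "upper_inv A = V"
    unfolding upper_inv_def
  proof (rule the_equality)
    show "(\<forall>i<0. V i = (\<lambda>p. 0)) \<and> opmult A V = Lam 0 \<and> opmult V A = Lam 0"
      using bV V1 V2 by (simp add: bbb_def)
  next
    fix V' assume "(\<forall>i<0. V' i = (\<lambda>p. 0)) \<and> opmult A V' = Lam 0 \<and> opmult V' A = Lam 0"
    then show "V' = V" using uniq by (simp add: bbb_def)
  qed
  then show ?thesis using bV V1 V2 by simp
qed



lemma hassum_to_sums_up:
  fixes f :: "int \<Rightarrow> complex"
  assumes z: "\<forall>i<0. f i = 0" and h: "(f has_sum S) UNIV"
  shows "(\<lambda>d. f (int d)) sums S"
proof -
  have "(f has_sum S) (range int)"
    using h has_sum_cong_neutral[of "range int" UNIV f f S] z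
    by (metis Diff_iff Diff_empty UNIV_I diff_shunt nonneg_int_cases rangeI not_le)
  then have "((f \<circ> int) has_sum S) UNIV" by (simp add: has_sum_reindex)
  then show ?thesis by (intro has_sum_imp_sums) (simp add: o_def)
qed


lemma nonvan0:
  fixes a :: "int \<Rightarrow> complex"
  assumes z: "\<forall>i<0. a i = 0" and a0: "a 0 \<noteq> 0"
    and ev: "\<forall>\<^sub>F z in at 0. (\<lambda>i. a i * z powi i) summable_on UNIV"
  shows "\<forall>\<^sub>F z in at 0. infsum (\<lambda>i. a i * z powi i) UNIV \<noteq> 0"
proof -
  define g where "g = (\<lambda>u. suminf (\<lambda>d. a (int d) * u ^ d))"
  have conv: "(\<lambda>d. a (int d) * u ^ d) sums infsum (\<lambda>i. a i * u powi i) UNIV"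
    if "(\<lambda>i. a i * u powi i) summable_on UNIV" for u
  proof -
    have "(\<lambda>d. a (int d) * u powi (int d)) sums infsum (\<lambda>i. a i * u powi i) UNIV"
      by (rule hassum_to_sums_up) (use z that in auto)
    then show ?thesis by simp
  qed
  from ev obtain d where d: "d > 0" and dP: "\<And>x. x \<noteq> 0 \<Longrightarrow> dist x 0 < d \<Longrightarrow> (\<lambda>i. a i * x powi i) summable_on UNIV"
    unfolding eventually_at by auto
  define z0 where "z0 = complex_of_real (d / 2)"
  have z0: "z0 \<noteq> 0" "dist z0 0 < d" using d by (auto simp: z0_def)
  have "summable (\<lambda>n. a (int n) * z0 ^ n)"
    using conv[OF dP[OF z0]] by (rule sums_summable)
  then have "isCont g 0" unfolding g_def by (rule isCont_powser) (use z0 in simp)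
  moreover have "g 0 = a 0" by (simp add: g_def)
  ultimately have "(g \<longlongrightarrow> a 0) (at 0)" by (simp add: isCont_def)
  then have ev1: "\<forall>\<^sub>F z in at 0. g z \<noteq> 0" using a0 by (rule tendsto_imp_eventually_ne)
  have ev2: "\<forall>\<^sub>F z in at 0. infsum (\<lambda>i. a i * z powi i) UNIV = g z"
    using ev by eventually_elim (auto simp: g_def dest!: conv sums_unique)
  show ?thesis using ev1 ev2 by eventually_elim simp
qed



lemma opmult_zero_left[simp]: "opmult (\<lambda>i p. 0) X = (\<lambda>i p. 0)"
  by (intro ext) (simp add: opmult_apply)

lemma act_zero[simp]: "act (\<lambda>i p. 0) p z = 0"
  by (simp add: act_def)

lemma act_Lam:
  assumes z: "z \<noteq> 0"
  shows "act (opmult A (Lam c)) p z = z powi c * act A p z"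
proof -
  have "act (opmult A (Lam c)) p z = infsum (\<lambda>i. A (i - c) p * z powi i) UNIV"
    by (simp add: act_def opmult_Lam_right)
  also have "(\<lambda>i. A (i - c) p * z powi i) = (\<lambda>i. z powi c * (A (i - c) p * z powi (i - c)))"
  proof (intro ext)
    fix i
    have "z powi i = z powi (c + (i - c))" by simp
    also have "\<dots> = z powi c * z powi (i - c)" using z by (rule power_int_add[OF disjI1])
    finally show "A (i - c) p * z powi i = z powi c * (A (i - c) p * z powi (i - c))" by simp
  qed
  also have "infsum \<dots> UNIV = z powi c * infsum (\<lambda>i. A (i - c) p * z powi (i - c)) UNIV"
    by (rule infsum_cmult_right')
  also have "infsum (\<lambda>i. A (i - c) p * z powi (i - c)) UNIV = infsum (\<lambda>i. A i p * z powi i) UNIV"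
  proof (rule infsum_reindex_bij_betw)
    show "bij_betw (\<lambda>i. i - c) UNIV UNIV"
    proof (rule bij_betwI')
      fix y :: int show "\<exists>x\<in>UNIV. y = x - c" by (rule bexI[of _ "y + c"]) auto
    qed auto
  qed
  finally show ?thesis by (simp add: act_def)
qed


lemma nonvan_W:
  fixes W :: dop
  assumes bW: "bab W 0" and W0: "W 0 p = 1"
    and ev: "\<forall>\<^sub>F z in at_infinity. ((\<lambda>i. W i p * z powi i) has_sum S z) UNIV"
  shows "\<forall>\<^sub>F z in at_infinity. act W p z \<noteq> 0"
proof -
  define a where "a = (\<lambda>i. W (- i) p)"
  have re: "(\<lambda>i. a i * inverse z powi i) = (\<lambda>i. (\<lambda>j. W j p * z powi j) (uminus i))" for z
    by (simp add: a_def power_int_inverse power_int_minus)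
  have bij: "bij_betw uminus (UNIV :: int set) UNIV"
  proof (rule bij_betwI')
    fix y :: int show "\<exists>x\<in>UNIV. y = - x" by (rule bexI[of _ "- y"]) auto
  qed auto
  have ev': "\<forall>\<^sub>F u in at 0. (\<lambda>i. a i * u powi i) summable_on UNIV"
    unfolding at_to_infinity eventually_filtermap
    using ev
  proof eventually_elim
    case (elim z)
    then have "(\<lambda>j. W j p * z powi j) summable_on UNIV" by (auto simp: summable_on_def)
    then show ?case unfolding re by (subst summable_on_reindex_bij_betw[OF bij])
  qed
  have z: "\<forall>i<0. a i = 0" using bW by (auto simp: a_def bab_def)
  have "\<forall>\<^sub>F u in at 0. infsum (\<lambda>i. a i * u powi i) UNIV \<noteq> 0"
    by (rule nonvan0[OF z _ ev']) (simp add: a_def W0)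
  then have "\<forall>\<^sub>F z in at_infinity. infsum (\<lambda>i. a i * inverse z powi i) UNIV \<noteq> 0"
    unfolding at_to_infinity eventually_filtermap by simp
  then show ?thesis
  proof eventually_elim
    case (elim z)
    then show ?case unfolding re act_def by (subst (asm) infsum_reindex_bij_betw[OF bij])
  qed
qed

lemma nonvan_Wb:
  fixes Wb :: dop
  assumes bW: "bbb Wb 0" and W0: "Wb 0 p \<noteq> 0"
    and ev: "\<forall>\<^sub>F z in at 0. ((\<lambda>i. Wb i p * z powi i) has_sum S z) UNIV"
  shows "\<forall>\<^sub>F z in at 0. act Wb p z \<noteq> 0"
proof -
  have z: "\<forall>i<0. Wb i p = 0" using bW by (auto simp: bbb_def)
  have ev': "\<forall>\<^sub>F u in at 0. (\<lambda>i. Wb i p * u powi i) summable_on UNIV"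
    using ev by eventually_elim (auto simp: summable_on_def)
  show ?thesis unfolding act_def by (rule nonvan0[OF z W0 ev'])
qed


theorem lemma4p3:
  fixes k m n :: nat and \<tau> :: fn and w wb :: "nat \<Rightarrow> fn"
  assumes "k \<ge> 1" and "m \<ge> 1"
    and "tau_EBTH k m \<tau> w wb"
    and "n \<ge> 1"
  shows "(\<forall>p. \<forall>\<^sub>F z in at_infinity.
            - act (opmult (opminus (fracK (Wop w) (- int n))) (Wop w)) p z / act (Wop w) p z
              = Gop z (\<lambda>q. of_nat n * tv q n) p - of_nat n * tv p n)
       \<and> (\<forall>p. \<forall>\<^sub>F z in at 0.
            act (opmult (opplus (fracK (Wop w) (- int n))) (Wbop wb)) p z / act (Wbop wb) p z
              = Gbar z (\<lambda>q. of_nat n * tv q n) p - of_nat n * tv p n)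
       \<and> (\<forall>p. \<forall>\<^sub>F z in at_infinity.
            - act (opmult (opminus (fracM (Wbop wb) (- int n))) (Wop w)) p z / act (Wop w) p z
              = Gop z (\<lambda>q. of_nat n * tbv q n) p - of_nat n * tbv p n)
       \<and> (\<forall>p. \<forall>\<^sub>F z in at 0.
            act (opmult (opplus (fracM (Wbop wb) (- int n))) (Wbop wb)) p z / act (Wbop wb) p z
              = Gbar z (\<lambda>q. of_nat n * tbv q n) p - of_nat n * tbv p n)"
proof -
  define W where "W = Wop w"
  define Wb where "Wb = Wbop wb"
  define N where "N = int n"
  have N1: "N \<ge> 1" using assms(4) by (simp add: N_def)
  have hyp: "(\<forall>p. \<forall>\<^sub>F z in at_infinity. ((\<lambda>i. W i p * z powi i) has_sum (Gop z \<tau> p / \<tau> p)) UNIV)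
     \<and> (\<forall>p. \<forall>\<^sub>F z in at 0. ((\<lambda>i. Wb i p * z powi i) has_sum (Gbar z \<tau> p / \<tau> p)) UNIV)
     \<and> (\<forall>p. wb 0 p \<noteq> 0)"
    using assms(3) unfolding tau_EBTH_def W_def Wb_def by blast
  then have hW: "\<And>p. \<forall>\<^sub>F z in at_infinity. ((\<lambda>i. W i p * z powi i) has_sum (Gop z \<tau> p / \<tau> p)) UNIV"
    and hWb: "\<And>p. \<forall>\<^sub>F z in at 0. ((\<lambda>i. Wb i p * z powi i) has_sum (Gbar z \<tau> p / \<tau> p)) UNIV"
    and wb0: "\<And>p. wb 0 p \<noteq> 0" by blast+
  have bW: "bab W 0" by (auto simp: bab_def W_def Wop_def)
  have W0: "\<forall>p. W 0 p \<noteq> 0" by (simp add: W_def Wop_def)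
  have W1: "\<And>p. W 0 p = 1" by (simp add: W_def Wop_def)
  have bWb: "bbb Wb 0" by (auto simp: bbb_def Wb_def Wbop_def)
  have Wb0: "\<forall>p. Wb 0 p \<noteq> 0" using wb0 by (simp add: Wb_def Wbop_def)
  obtain V where V: "lower_inv W = V" "bab V 0" "opmult W V = Lam 0" "opmult V W = Lam 0"
    using lower_inv_props[OF bW W0] by blast
  obtain Vb where Vb: "upper_inv Wb = Vb" "bbb Vb 0" "opmult Wb Vb = Lam 0" "opmult Vb Wb = Lam 0"
    using upper_inv_props[OF bWb Wb0] by blast
  define F where "F = fracK W (- N)"
  have F': "F = opmult (opmult W (Lam (- N))) V" by (simp add: F_def fracK_def V(1))
  have bWL: "bab (opmult W (Lam (- N))) (0 + - N)" by (rule bab_mult[OF bW bab_Lam])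
  have bF: "bab F (0 + - N + 0)" unfolding F' by (rule bab_mult[OF bWL V(2)])
  have Fm: "opminus F = F"
  proof (intro ext)
    fix i p show "opminus F i p = F i p"
      using bF N1 by (cases "i < 0") (auto simp: opminus_def bab_def)
  qed
  have Fp: "opplus F = (\<lambda>i p. 0)"
  proof (intro ext)
    fix i p show "opplus F i p = 0"
      using bF N1 by (cases "i < 0") (auto simp: opplus_def bab_def)
  qed
  have FW: "opmult F W = opmult W (Lam (- N))"
    unfolding F' by (simp add: assoc_bab[OF bWL V(2) bW] V(4))
  define G where "G = fracM Wb (- N)"
  have G': "G = opmult (opmult Wb (Lam N)) Vb" by (simp add: G_def fracM_def Vb(1))
  have bWbL: "bbb (opmult Wb (Lam N)) (0 + N)" by (rule bbb_mult[OF bWb bbb_Lam])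
  have bG: "bbb G (0 + N + 0)" unfolding G' by (rule bbb_mult[OF bWbL Vb(2)])
  have Gp: "opplus G = G"
  proof (intro ext)
    fix i p show "opplus G i p = G i p"
      using bG N1 by (cases "0 \<le> i") (auto simp: opplus_def bbb_def)
  qed
  have Gm: "opminus G = (\<lambda>i p. 0)"
  proof (intro ext)
    fix i p show "opminus G i p = 0"
      using bG N1 by (cases "0 \<le> i") (auto simp: opminus_def bbb_def)
  qed
  have GW: "opmult G Wb = opmult Wb (Lam N)"
    unfolding G' by (simp add: assoc_bbb[OF bWbL Vb(2) bWb] Vb(4))
  have n0: "(of_nat n :: complex) \<noteq> 0" using assms(4) by simp
  have P1: "\<forall>p. \<forall>\<^sub>F z in at_infinity.
            - act (opmult (opminus F) W) p z / act W p z
              = Gop z (\<lambda>q. of_nat n * tv q n) p - of_nat n * tv p n"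
  proof
    fix p
    have e1: "\<forall>\<^sub>F z in at_infinity. act W p z \<noteq> 0" by (rule nonvan_W[OF bW W1 hW])
    have e2: "\<forall>\<^sub>F z in at_infinity. z \<noteq> (0::complex)"
      unfolding eventually_at_infinity by (rule exI[of _ 1]) auto
    show "\<forall>\<^sub>F z in at_infinity.
            - act (opmult (opminus F) W) p z / act W p z
              = Gop z (\<lambda>q. of_nat n * tv q n) p - of_nat n * tv p n"
      using e1 e2
    proof eventually_elim
      case (elim z)
      have "- act (opmult (opminus F) W) p z / act W p z = - (z powi (- N))"
        using elim by (simp add: Fm FW act_Lam)
      also have "\<dots> = Gop z (\<lambda>q. of_nat n * tv q n) p - of_nat n * tv p n"
        using n0 by (simp add: Gop_def bracket_def N_def power_int_minus field_simps)
      finally show ?case .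
    qed
  qed
  have P2: "\<forall>p. \<forall>\<^sub>F z in at 0.
            act (opmult (opplus F) Wb) p z / act Wb p z
              = Gbar z (\<lambda>q. of_nat n * tv q n) p - of_nat n * tv p n"
    by (simp add: Fp Gbar_def)
  have P3: "\<forall>p. \<forall>\<^sub>F z in at_infinity.
            - act (opmult (opminus G) W) p z / act W p z
              = Gop z (\<lambda>q. of_nat n * tbv q n) p - of_nat n * tbv p n"
    by (simp add: Gm Gop_def)
  have P4: "\<forall>p. \<forall>\<^sub>F z in at 0.
            act (opmult (opplus G) Wb) p z / act Wb p z
              = Gbar z (\<lambda>q. of_nat n * tbv q n) p - of_nat n * tbv p n"
  proof
    fix p
    have e1: "\<forall>\<^sub>F z in at 0. act Wb p z \<noteq> 0" using Wb0 by (intro nonvan_Wb[OF bWb _ hWb]) auto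
    have e2: "\<forall>\<^sub>F z in at 0. z \<noteq> (0::complex)"
      by (simp add: eventually_at_filter)
    show "\<forall>\<^sub>F z in at 0.
            act (opmult (opplus G) Wb) p z / act Wb p z
              = Gbar z (\<lambda>q. of_nat n * tbv q n) p - of_nat n * tbv p n"
      using e1 e2
    proof eventually_elim
      case (elim z)
      have "act (opmult (opplus G) Wb) p z / act Wb p z = z powi N"
        using elim by (simp add: Gp GW act_Lam)
      also have "\<dots> = Gbar z (\<lambda>q. of_nat n * tbv q n) p - of_nat n * tbv p n"
        using n0 by (simp add: Gbar_def bracket_def N_def field_simps)
      finally show ?case .
    qed
  qed
  show ?thesis using P1 P2 P3 P4 unfolding F_def G_def W_def Wb_def N_def by blast
qed


end
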